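(* Consider the following two-player complete-information contest. Players $X$ and $Y$ choose efforts $x,y\in[0,\infty)$. Fix real parameters $a\neq 0$, $b>0$, $c>0$ and a common marginal cost $\theta$ with $0<\theta<c$. Player $X$'s payoff is $P(x,y)-\theta x$ and player $Y$'s payoff is $1-P(x,y)-\theta y$, where $P(x,y)=\tfrac12+(x-y)\bigl(c-b(x+y)+axy\bigr)$ (no truncation; this is the "unrestricted" contest). Let $\kappa=b/a$ and $\zeta=\kappa^2-\frac{c-\theta}{a}=\frac{b^2-a(c-\theta)}{a^2}$. (1) If $\zeta\ge 0$, the unrestricted contest has a unique Nash equilibrium (in pure or mixed strategies), and it is the symmetric pure profile $x^*=y^*=\kappa-\operatorname{sgn}(a)\sqrt{\zeta}$. (2) If $\zeta<0$, no pure-strategy equilibrium exists. Every mixed equilibrium $(\mu_X,\mu_Y)$ satisfies $E[x]=E[y]=\kappa$ and $\operatorname{Var}(x)=\operatorname{Var}(y)=-\zeta$; conversely, every pair of probability distributions on $[0,\infty)$ with mean $\kappa$ and variance $-\zeta$ is a mixed Nash equilibrium of the unrestricted contest. The two regions meet at $\zeta=0$, i.e. when $b^2=a(c-\theta)$.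
   Context: Mixed strategies are probability distributions on $[0,\infty)$ with finite second moments, so that expected payoffs are well defined. A "mixed equilibrium" in part (2) means an equilibrium in which at least one player uses a nondegenerate distribution. *)

theory Defs
  imports "HOL-Probability.Probability"
begin

definition winP :: "real \<Rightarrow> real \<Rightarrow> real \<Rightarrow> real \<Rightarrow> real \<Rightarrow> real" where
  "winP a b c x y = 1/2 + (x - y) * (c - b * (x + y) + a * x * y)"

definition strategy :: "real measure \<Rightarrow> bool" where
  "strategy M \<longleftrightarrow> prob_space M \<and> sets M = sets borel \<and> (AE x in M. 0 \<le> x)
     \<and> integrable M (\<lambda>x. x ^ 2)"

definition payoffX :: "real \<Rightarrow> real \<Rightarrow> real \<Rightarrow> real \<Rightarrow> real measure \<Rightarrow> real measure \<Rightarrow> real" where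
  "payoffX a b c \<theta> M N =
     (\<integral>z. winP a b c (fst z) (snd z) \<partial>(M \<Otimes>\<^sub>M N)) - \<theta> * (\<integral>x. x \<partial>M)"

definition payoffY :: "real \<Rightarrow> real \<Rightarrow> real \<Rightarrow> real \<Rightarrow> real measure \<Rightarrow> real measure \<Rightarrow> real" where
  "payoffY a b c \<theta> M N =
     (\<integral>z. 1 - winP a b c (fst z) (snd z) \<partial>(M \<Otimes>\<^sub>M N)) - \<theta> * (\<integral>y. y \<partial>N)"

definition nash :: "real \<Rightarrow> real \<Rightarrow> real \<Rightarrow> real \<Rightarrow> real measure \<Rightarrow> real measure \<Rightarrow> bool" where
  "nash a b c \<theta> M N \<longleftrightarrow> strategy M \<and> strategy N \<and>
     (\<forall>M'. strategy M' \<longrightarrow> payoffX a b c \<theta> M' N \<le> payoffX a b c \<theta> M N) \<and>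
     (\<forall>N'. strategy N' \<longrightarrow> payoffY a b c \<theta> M N' \<le> payoffY a b c \<theta> M N)"

definition mean :: "real measure \<Rightarrow> real" where
  "mean M = (\<integral>x. x \<partial>M)"

definition var :: "real measure \<Rightarrow> real" where
  "var M = (\<integral>x. (x - mean M) ^ 2 \<partial>M)"

end

theory Submission
  imports Defs
begin


lemma unb:
  fixes A B V :: real
  assumes H: "\<forall>x'\<ge>0. A*x'^2 + B*x' \<le> V"
  shows "A \<le> 0" "A = 0 \<Longrightarrow> B \<le> 0"
proof -
  show "A \<le> 0"
  proof (rule ccontr)
    assume "\<not> A \<le> 0" hence A: "A > 0" by simp
    define s where "s = (\<bar>B\<bar> + \<bar>V\<bar> + 1)/A + 1"
    have s1: "s \<ge> 1" using A by (simp add: s_def)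
    have "A* s = \<bar>B\<bar> + \<bar>V\<bar> + 1 + A" using A by (simp add: s_def field_simps)
    hence "A* s + B \<ge> \<bar>V\<bar> + 1" using A by linarith
    hence "s*(A* s+B) \<ge> s*(\<bar>V\<bar> + 1)" using s1 by (intro mult_left_mono) auto
    moreover have "s*(\<bar>V\<bar> + 1) \<ge> \<bar>V\<bar> + 1" using s1
      by (intro mult_right_mono[of 1 s, simplified]) auto
    ultimately have "A* s^2 + B* s > V" by (simp add: power2_eq_square algebra_simps)
    moreover have "A* s^2 + B* s \<le> V" using H s1 by simp
    ultimately show False by linarith
  qed
  assume A0: "A = 0"
  show "B \<le> 0"
  proof (rule ccontr)
    assume "\<not> B \<le> 0" hence B: "B > 0" by simp
    define s where "s = (\<bar>V\<bar> + 1)/B"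
    have "B* s = \<bar>V\<bar> + 1" using B by (simp add: s_def)
    moreover have "s \<ge> 0" using B by (simp add: s_def)
    ultimately show False using H A0 by force
  qed
qed

lemma kkt:
  fixes A B x :: real
  assumes x: "x \<ge> 0" and H: "\<forall>x'\<ge>0. A*x'^2 + B*x' \<le> A*x^2 + B*x"
  shows "A \<le> 0" "2*A*x + B \<le> 0" "x*(2*A*x+B) = 0"
proof -
  show A: "A \<le> 0" using unb(1)[OF H] .
  define g where "g = 2*A*x + B"
  have diff: "A*(x+h)^2 + B*(x+h) - (A*x^2 + B*x) = h*(g + A*h)" for h
    by (simp add: g_def power2_eq_square algebra_simps)
  show g: "2*A*x + B \<le> 0"
  proof (rule ccontr)
    assume "\<not> ?thesis" hence gp: "g > 0" by (simp add: g_def)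
    define h where "h = g/(1-A)"
    have h: "h > 0" using gp A by (simp add: h_def)
    have "g + A*h = g/(1-A)" using A by (simp add: h_def field_simps)
    hence "h*(g + A*h) > 0" using h gp A by simp
    moreover have "A*(x+h)^2 + B*(x+h) \<le> A*x^2 + B*x" using H h x by simp
    ultimately show False using diff[of h] by linarith
  qed
  show "x*(2*A*x+B) = 0"
  proof (rule ccontr)
    assume "\<not> ?thesis"
    hence xp: "x > 0" and gn: "g < 0" using x g by (auto simp: g_def)
    have q: "-g/(1-A) > 0" using A gn by (intro divide_pos_pos) auto
    define s where "s = min x (-g/(1-A))"
    have s: "s > 0" "s \<le> x" "s \<le> -g/(1-A)" using xp q by (auto simp: s_def)
    have "A* s \<ge> A*(-g/(1-A))" using mult_left_mono_neg[OF s(3) A] .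
    moreover have "-g + A*(-g/(1-A)) = -g/(1-A)" using A by (simp add: field_simps)
    moreover have "-g/(1-A) > 0" using A gn by (intro divide_pos_pos) auto
    ultimately have "-g + A* s > 0" by linarith
    hence "(-s)*(g + A*(-s)) > 0" using s by (simp add: mult_pos_neg)
    moreover have "A*(x+(-s))^2 + B*(x+(-s)) \<le> A*x^2 + B*x" using H s by simp
    ultimately show False using diff[of "-s"] by linarith
  qed
qed

lemma pure:
  fixes a b t x y :: real
  assumes a: "a \<noteq> 0" and b: "b > 0" and t: "t > 0" and x: "x \<ge> 0" and y: "y \<ge> 0"
  and HX: "\<forall>x'\<ge>0. (a*y-b)*x'^2 + (t-a*y^2)*x' \<le> (a*y-b)*x^2 + (t-a*y^2)*x"
  and HY: "\<forall>y'\<ge>0. (a*x-b)*y'^2 + (t-a*x^2)*y' \<le> (a*x-b)*y^2 + (t-a*x^2)*y"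
  shows "x = y \<and> a*x^2 - 2*b*x + t = 0 \<and> a*x - b \<le> 0"
proof -
  note kx = kkt[OF x HX] and ky = kkt[OF y HY]
  have x0: "x > 0"
  proof (rule ccontr)
    assume "\<not> x > 0" hence x0: "x = 0" using x by simp
    have "y \<noteq> 0" using ky(2) x0 t by auto
    hence g: "2*(a*x-b)*y + (t-a*x^2) = 0" using ky(3) y by simp
    hence yv: "2*b*y = t" using x0 by simp
    have "a*y \<le> b" using kx(1) by simp
    hence "2*b*(a*y) \<le> 2*b*b" using mult_left_mono[of "a*y" b "2*b"] b by simp
    moreover have "a*t = 2*b*(a*y)" unfolding yv[symmetric] by (simp add: algebra_simps)
    ultimately have at: "a*t \<le> 2*b*b" by linarith
    have "t \<le> a*y^2" using kx(2) x0 by simp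
    hence "4*b^2*t \<le> 4*b^2*(a*y^2)" using mult_left_mono[of t "a*y^2" "4*b^2"] by simp
    moreover have "4*b^2*(a*y^2) = a*t*t" unfolding yv[symmetric] by (simp add: power2_eq_square algebra_simps)
    ultimately have "(4*b^2)*t \<le> (a*t)*t" by simp
    hence "4*b^2 \<le> a*t" using t by simp
    moreover have "b*b > 0" using b by simp
    ultimately show False using at by (simp add: power2_eq_square)
  qed
  have y0: "y > 0"
  proof (rule ccontr)
    assume "\<not> y > 0" hence y0: "y = 0" using y by simp
    have "x \<noteq> 0" using kx(2) y0 t by auto
    hence g: "2*(a*y-b)*x + (t-a*y^2) = 0" using kx(3) x by simp
    hence yv: "2*b*x = t" using y0 by simp
    have "a*x \<le> b" using ky(1) by simp
    hence "2*b*(a*x) \<le> 2*b*b" using mult_left_mono[of "a*x" b "2*b"] b by simp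
    moreover have "a*t = 2*b*(a*x)" unfolding yv[symmetric] by (simp add: algebra_simps)
    ultimately have at: "a*t \<le> 2*b*b" by linarith
    have "t \<le> a*x^2" using ky(2) y0 by simp
    hence "4*b^2*t \<le> 4*b^2*(a*x^2)" using mult_left_mono[of t "a*x^2" "4*b^2"] by simp
    moreover have "4*b^2*(a*x^2) = a*t*t" unfolding yv[symmetric] by (simp add: power2_eq_square algebra_simps)
    ultimately have "(4*b^2)*t \<le> (a*t)*t" by simp
    hence "4*b^2 \<le> a*t" using t by simp
    moreover have "b*b > 0" using b by simp
    ultimately show False using at by (simp add: power2_eq_square)
  qed
  have g1: "2*(a*y-b)*x + (t-a*y^2) = 0" using kx(3) x0 by simp
  have g2: "2*(a*x-b)*y + (t-a*x^2) = 0" using ky(3) y0 by simp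
  have "(x-y)*(a*(x+y) - 2*b) = 0" using g1 g2 by (simp add: power2_eq_square algebra_simps)
  hence "x - y = 0 \<or> a*(x+y) - 2*b = 0" by simp
  hence xy: "x = y"
  proof (elim disjE)
    assume "a*(x+y) - 2*b = 0"
    hence "(a*y-b) + (a*x-b) = 0" by (simp add: algebra_simps)
    hence "a*y = b" "a*x = b" using kx(1) ky(1) by auto
    hence "a*x = a*y" by simp
    thus "x = y" using a by simp
  qed simp
  show ?thesis using xy g1 kx(1) by (simp add: power2_eq_square algebra_simps)
qed

lemma half:
  fixes a b t m1 m2 n1 n2 :: real
  assumes a: "a \<noteq> 0" and b: "b > 0" and t: "t > 0"
  and m: "m1 \<ge> 0" "m2 \<ge> m1^2" and n: "n1 \<ge> 0" "n2 \<ge> n1^2"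
  and HX: "\<forall>x\<ge>0. (a*n1-b)*x^2 + (t-a*n2)*x \<le> (a*n1-b)*m2 + (t-a*n2)*m1"
  and HY: "\<forall>y\<ge>0. (a*m1-b)*y^2 + (t-a*m2)*y \<le> (a*m1-b)*n2 + (t-a*m2)*n1"
  and vm: "m2 > m1^2"
  shows "m1 = b/a \<and> n1 = b/a \<and> m2 = t/a \<and> n2 = t/a"
proof -
  have AX: "a*n1 - b \<le> 0" using unb(1)[OF HX] .
  have "(a*n1-b)*m1^2 \<le> (a*n1-b)*m2" using HX m by force
  hence "(a*n1-b)*(m2 - m1^2) \<ge> 0" by (simp add: algebra_simps)
  hence "a*n1 - b \<ge> 0" using vm by (simp add: zero_le_mult_iff)
  hence an: "a*n1 = b" using AX by simp
  have BX: "t - a*n2 \<le> 0" using unb(2)[OF HX] an by simp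
  have BXm: "0 \<le> (t-a*n2)*m1" using HX an by force
  have n1p: "n1 > 0" using an b n by (cases "n1 = 0") auto
  have ap: "a > 0" using mult_nonpos_nonneg[of a n1] an b n1p by (cases "a > 0") auto
  have n1v: "n1 = b/a" using an a by (simp add: field_simps)
  show ?thesis
  proof (cases "n2 > n1^2")
    case True
    have AY: "a*m1 - b \<le> 0" using unb(1)[OF HY] .
    have "(a*m1-b)*n1^2 \<le> (a*m1-b)*n2" using HY n by force
    hence "(a*m1-b)*(n2 - n1^2) \<ge> 0" by (simp add: algebra_simps)
    hence "a*m1 - b \<ge> 0" using True by (simp add: zero_le_mult_iff)
    hence am: "a*m1 = b" using AY by simp
    have BY: "t - a*m2 \<le> 0" using unb(2)[OF HY] am by simp
    have BYn: "0 \<le> (t-a*m2)*n1" using HY am by force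
    have m1p: "m1 > 0" using am b m by (cases "m1 = 0") auto
    have "t - a*n2 = 0" using BX BXm m1p by (simp add: zero_le_mult_iff)
    moreover have "t - a*m2 = 0" using BY BYn n1p by (simp add: zero_le_mult_iff)
    ultimately show ?thesis using am an a by (simp add: field_simps)
  next
    case False
    hence n2e: "n2 = n1^2" using n by simp
    have HY': "\<forall>y\<ge>0. (a*m1-b)*y^2 + (t-a*m2)*y \<le> (a*m1-b)*n1^2 + (t-a*m2)*n1"
      using HY n2e by simp
    have "n1*(2*(a*m1-b)*n1 + (t-a*m2)) = 0" using kkt(3)[OF n(1) HY'] by simp
    hence g: "2*(a*m1-b)*n1 + (t-a*m2) = 0" using n1p by simp
    hence "a*m2 = t + 2*a*m1*n1 - 2*b*n1" by (simp add: algebra_simps)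
    moreover have "a*m1*n1 = b*m1" using an by (metis mult.commute mult.left_commute)
    ultimately have "a*m2 = t + 2*b*m1 - 2*b*n1" by linarith
    moreover have "t \<le> a*n1^2" using BX n2e by simp
    ultimately have "a*m2 \<le> a*n1^2 + 2*b*m1 - 2*b*n1" by simp
    also have "\<dots> = a*(n1^2 + 2*n1*m1 - 2*n1*n1)" unfolding an[symmetric] by (simp add: algebra_simps power2_eq_square)
    finally have "m2 \<le> n1^2 + 2*n1*m1 - 2*n1*n1" using ap by simp
    also have "\<dots> = m1^2 - (m1 - n1)^2" by (simp add: algebra_simps power2_eq_square)
    finally have "m2 \<le> m1^2" using zero_le_power2[of "m1-n1"] by linarith
    with vm show ?thesis by simp
  qed
qed



lemma strat_meas:
  assumes "strategy M" "f \<in> borel_measurable borel"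
  shows "f \<in> borel_measurable M"
proof -
  have "sets M = sets borel" using assms unfolding strategy_def by simp
  thus ?thesis using assms(2) measurable_cong_sets[of M borel borel borel] by simp
qed

lemma strat_int:
  assumes "strategy M"
  shows "integrable M (\<lambda>x. x)" "integrable M (\<lambda>x. x^2)" "integrable M (\<lambda>x. 1::real)"
proof -
  interpret prob_space M using assms unfolding strategy_def by simp
  show i2: "integrable M (\<lambda>x. x^2)" using assms unfolding strategy_def by simp
  show "integrable M (\<lambda>x. x)"
    by (rule square_integrable_imp_integrable[OF strat_meas[OF assms] i2]) simp
  show "integrable M (\<lambda>x. 1::real)" by simp
qed

lemma prod_int:
  fixes f g :: "real \<Rightarrow> real"
  assumes "prob_space M" "prob_space N" and f: "integrable M f" and g: "integrable N g"
  shows "integrable (M \<Otimes>\<^sub>M N) (\<lambda>z. f (fst z) * g (snd z))"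
    "(\<integral>z. f (fst z) * g (snd z) \<partial>(M \<Otimes>\<^sub>M N)) = (\<integral>x. f x \<partial>M) * (\<integral>y. g y \<partial>N)"
proof -
  interpret M: prob_space M by fact
  interpret N: prob_space N by fact
  interpret pair_sigma_finite M N
    by (intro pair_sigma_finite.intro M.sigma_finite_measure_axioms N.sigma_finite_measure_axioms)
  have [measurable]: "f \<in> borel_measurable M" "g \<in> borel_measurable N" using f g by auto
  show I: "integrable (M \<Otimes>\<^sub>M N) (\<lambda>z. f (fst z) * g (snd z))"
  proof (rule Fubini_integrable)
    show "(\<lambda>z. f (fst z) * g (snd z)) \<in> borel_measurable (M \<Otimes>\<^sub>M N)" by measurable
    have "(\<lambda>x. \<integral>y. norm (f (fst (x,y)) * g (snd (x,y))) \<partial>N) = (\<lambda>x. norm (f x) * (\<integral>y. norm (g y) \<partial>N))"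
      by (simp add: abs_mult)
    moreover have "integrable M (\<lambda>x. norm (f x) * (\<integral>y. norm (g y) \<partial>N))"
      using f by (intro integrable_mult_left) auto
    ultimately show "integrable M (\<lambda>x. \<integral>y. norm (f (fst (x,y)) * g (snd (x,y))) \<partial>N)" by simp
    show "AE x in M. integrable N (\<lambda>y. f (fst (x,y)) * g (snd (x,y)))" using g by simp
  qed
  have "(\<integral>z. f (fst z) * g (snd z) \<partial>(M \<Otimes>\<^sub>M N)) = (\<integral>x. (\<integral>y. f x * g y \<partial>N) \<partial>M)"
    using integral_fst'[OF I] by simp
  also have "\<dots> = (\<integral>x. f x * (\<integral>y. g y \<partial>N) \<partial>M)" by simp
  also have "\<dots> = (\<integral>x. f x \<partial>M) * (\<integral>y. g y \<partial>N)" by simp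
  finally show "(\<integral>z. f (fst z) * g (snd z) \<partial>(M \<Otimes>\<^sub>M N)) = (\<integral>x. f x \<partial>M) * (\<integral>y. g y \<partial>N)" .
qed

lemma payoff_formulas:
  assumes M: "strategy M" and N: "strategy N"
  defines "m1 \<equiv> \<integral>x. x \<partial>M" and "m2 \<equiv> \<integral>x. x^2 \<partial>M"
  defines "n1 \<equiv> \<integral>x. x \<partial>N" and "n2 \<equiv> \<integral>x. x^2 \<partial>N"
  shows "payoffX a b c \<theta> M N = 1/2 - c*n1 + b*n2 + (a*n1 - b)*m2 + (c-\<theta>-a*n2)*m1"
    "payoffY a b c \<theta> M N = 1/2 - c*m1 + b*m2 + (a*m1 - b)*n2 + (c-\<theta>-a*m2)*n1"
proof -
  have pM: "prob_space M" and pN: "prob_space N" using M N unfolding strategy_def by auto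
  interpret M: prob_space M by fact
  interpret N: prob_space N by fact
  interpret pair_prob_space M N
    by (intro pair_prob_space.intro pair_sigma_finite.intro M.sigma_finite_measure_axioms N.sigma_finite_measure_axioms pM pN)
  note iM = strat_int[OF M] and iN = strat_int[OF N]
  let ?P = "M \<Otimes>\<^sub>M N"
  note i10 = prod_int[OF pM pN iM(1) iN(3)]
  note i01 = prod_int[OF pM pN iM(3) iN(1)]
  note i20 = prod_int[OF pM pN iM(2) iN(3)]
  note i02 = prod_int[OF pM pN iM(3) iN(2)]
  note i21 = prod_int[OF pM pN iM(2) iN(1)]
  note i12 = prod_int[OF pM pN iM(1) iN(2)]
  have int1: "(\<integral>x. 1 \<partial>M) = (1::real)" "(\<integral>x. 1 \<partial>N) = (1::real)" by (simp_all add: M.prob_space N.prob_space)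
  have e: "(\<lambda>z. winP a b c (fst z) (snd z)) = (\<lambda>z. 1/2 + c*(fst z * 1) - c*(1 * snd z)
     - b*((fst z)^2*1) + b*(1*(snd z)^2) + a*((fst z)^2 * snd z) - a*(fst z * (snd z)^2))"
    by (auto simp: winP_def algebra_simps power2_eq_square)
  have W: "(\<integral>z. winP a b c (fst z) (snd z) \<partial>?P) = 1/2 + c*m1 - c*n1 - b*m2 + b*n2 + a*m2*n1 - a*m1*n2"
    unfolding e
    using i10 i01 i20 i02 i21 i12
    by (simp add: M.prob_space N.prob_space P.prob_space m1_def m2_def n1_def n2_def)
  have W2: "(\<integral>z. 1 - winP a b c (fst z) (snd z) \<partial>?P) = 1 - (\<integral>z. winP a b c (fst z) (snd z) \<partial>?P)"
  proof -
    have "integrable ?P (\<lambda>z. winP a b c (fst z) (snd z))"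
      unfolding e using i10 i01 i20 i02 i21 i12 by simp
    thus ?thesis by (simp add: P.prob_space)
  qed
  show "payoffX a b c \<theta> M N = 1/2 - c*n1 + b*n2 + (a*n1 - b)*m2 + (c-\<theta>-a*n2)*m1"
    unfolding payoffX_def W m1_def[symmetric] by (simp add: algebra_simps)
  show "payoffY a b c \<theta> M N = 1/2 - c*m1 + b*m2 + (a*m1 - b)*n2 + (c-\<theta>-a*m2)*n1"
    unfolding payoffY_def W2 W n1_def[symmetric] by (simp add: algebra_simps)
qed

lemma strat_moments:
  assumes M: "strategy M"
  shows "mean M \<ge> 0" "var M = (\<integral>x. x^2 \<partial>M) - (mean M)^2" "(\<integral>x. x^2 \<partial>M) \<ge> (mean M)^2"
proof -
  interpret prob_space M using M unfolding strategy_def by simp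
  note iM = strat_int[OF M]
  show "mean M \<ge> 0" unfolding mean_def
    by (rule integral_nonneg_AE) (use M in \<open>simp add: strategy_def\<close>)
  have e: "(\<lambda>x. (x - mean M)^2) = (\<lambda>x. x^2 - 2*mean M * x + (mean M)^2)"
    by (auto simp: power2_eq_square algebra_simps)
  show v: "var M = (\<integral>x. x^2 \<partial>M) - (mean M)^2"
    unfolding var_def e using iM
    by (simp add: prob_space power2_eq_square) (simp add: mean_def)
  have "var M \<ge> 0" unfolding var_def by simp
  thus "(\<integral>x. x^2 \<partial>M) \<ge> (mean M)^2" using v by simp
qed

lemma return_strat:
  assumes "(x::real) \<ge> 0"
  shows "strategy (return borel x)" "mean (return borel x) = x"
    "(\<integral>y. y^2 \<partial>return borel x) = x^2"
proof -
  show "strategy (return borel x)" unfolding strategy_def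
    using assms by (auto simp: prob_space_return AE_return integrable_iff_bounded nn_integral_return)
  show "mean (return borel x) = x" unfolding mean_def by (simp add: integral_return)
  show "(\<integral>y. y^2 \<partial>return borel x) = x^2" by (simp add: integral_return)
qed

lemma var0:
  assumes M: "strategy M" and v: "var M = 0"
  shows "M = return borel (mean M)"
proof -
  interpret prob_space M using M unfolding strategy_def by simp
  have sM: "sets M = sets borel" using M unfolding strategy_def by simp
  hence spM: "space M = UNIV" using sets_eq_imp_space_eq by fastforce
  have meas: "(\<lambda>x. (x - mean M)^2) \<in> borel_measurable M" by (rule strat_meas[OF M]) simp
  have int: "integrable M (\<lambda>x. (x - mean M)^2)"
    using strat_int[OF M] unfolding power2_eq_square by (simp add: algebra_simps)
  have "AE x in M. (x - mean M)^2 = 0"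
    using v unfolding var_def by (subst (asm) integral_nonneg_eq_0_iff_AE[OF int]) auto
  hence AE: "AE x in M. x = mean M" by simp
  show ?thesis
  proof (rule measure_eqI)
    show "sets M = sets (return borel (mean M))" using sM by simp
    fix A assume A: "A \<in> sets M"
    hence Ab: "A \<in> sets borel" using sM by simp
    show "emeasure M A = emeasure (return borel (mean M)) A"
    proof (cases "mean M \<in> A")
      case True
      have "emeasure M A = emeasure M (space M)"
        by (rule emeasure_eq_AE) (use AE A True in auto)
      thus ?thesis using True Ab emeasure_space_1 by simp
    next
      case False
      have "emeasure M A = emeasure M {}"
        by (rule emeasure_eq_AE) (use AE A False in auto)
      thus ?thesis using False Ab by simp
    qed
  qed
qed


lemma nash_ineqs:
  assumes "nash a b c \<theta> M N"
  defines "m1 \<equiv> mean M" and "m2 \<equiv> \<integral>x. x^2 \<partial>M"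
  defines "n1 \<equiv> mean N" and "n2 \<equiv> \<integral>x. x^2 \<partial>N"
  defines "t \<equiv> c - \<theta>"
  shows "\<forall>x\<ge>0. (a*n1-b)*x^2 + (t-a*n2)*x \<le> (a*n1-b)*m2 + (t-a*n2)*m1"
    "\<forall>y\<ge>0. (a*m1-b)*y^2 + (t-a*m2)*y \<le> (a*m1-b)*n2 + (t-a*m2)*n1"
proof -
  have M: "strategy M" and N: "strategy N" using assms(1) unfolding nash_def by auto
  show "\<forall>x\<ge>0. (a*n1-b)*x^2 + (t-a*n2)*x \<le> (a*n1-b)*m2 + (t-a*n2)*m1"
  proof (intro allI impI)
    fix x :: real assume x: "x \<ge> 0"
    have "payoffX a b c \<theta> (return borel x) N \<le> payoffX a b c \<theta> M N"
      using assms(1) return_strat(1)[OF x] unfolding nash_def by blast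
    thus "(a*n1-b)*x^2 + (t-a*n2)*x \<le> (a*n1-b)*m2 + (t-a*n2)*m1"
      unfolding payoff_formulas[OF return_strat(1)[OF x] N] payoff_formulas[OF M N]
      using return_strat[OF x] by (simp add: mean_def m1_def m2_def n1_def n2_def t_def)
  qed
  show "\<forall>y\<ge>0. (a*m1-b)*y^2 + (t-a*m2)*y \<le> (a*m1-b)*n2 + (t-a*m2)*n1"
  proof (intro allI impI)
    fix y :: real assume y: "y \<ge> 0"
    have "payoffY a b c \<theta> M (return borel y) \<le> payoffY a b c \<theta> M N"
      using assms(1) return_strat(1)[OF y] unfolding nash_def by blast
    thus "(a*m1-b)*y^2 + (t-a*m2)*y \<le> (a*m1-b)*n2 + (t-a*m2)*n1"
      unfolding payoff_formulas[OF M return_strat(1)[OF y]] payoff_formulas[OF M N]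
      using return_strat[OF y] by (simp add: mean_def m1_def m2_def n1_def n2_def t_def)
  qed
qed

lemma nash_suff:
  fixes a b c \<theta> :: real
  assumes M: "strategy M" and N: "strategy N"
  defines "m1 \<equiv> mean M" and "m2 \<equiv> \<integral>x. x^2 \<partial>M"
  defines "n1 \<equiv> mean N" and "n2 \<equiv> \<integral>x. x^2 \<partial>N"
  defines "t \<equiv> c - \<theta>"
  assumes HX: "\<And>M'. strategy M' \<Longrightarrow> (a*n1-b)*(\<integral>x. x^2 \<partial>M') + (t-a*n2)*mean M' \<le> (a*n1-b)*m2 + (t-a*n2)*m1"
  assumes HY: "\<And>N'. strategy N' \<Longrightarrow> (a*m1-b)*(\<integral>x. x^2 \<partial>N') + (t-a*m2)*mean N' \<le> (a*m1-b)*n2 + (t-a*m2)*n1"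
  shows "nash a b c \<theta> M N"
  unfolding nash_def
proof (intro conjI allI impI M N)
  fix M' assume M': "strategy M'"
  show "payoffX a b c \<theta> M' N \<le> payoffX a b c \<theta> M N"
    unfolding payoff_formulas[OF M' N] payoff_formulas[OF M N]
    using HX[OF M'] by (simp add: mean_def m1_def m2_def n1_def n2_def t_def)
next
  fix N' assume N': "strategy N'"
  show "payoffY a b c \<theta> M N' \<le> payoffY a b c \<theta> M N"
    unfolding payoff_formulas[OF M N'] payoff_formulas[OF M N]
    using HY[OF N'] by (simp add: mean_def m1_def m2_def n1_def n2_def t_def)
qed

lemma nash_cases:
  fixes a b c \<theta> :: real
  assumes a: "a \<noteq> 0" and b: "b > 0" and t: "c - \<theta> > 0" and NE: "nash a b c \<theta> M N"
  shows "(var M = 0 \<and> var N = 0 \<and> mean N = mean M \<and> a*(mean M)^2 - 2*b*mean M + (c-\<theta>) = 0 \<and> a*mean M - b \<le> 0)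
     \<or> (mean M = b/a \<and> mean N = b/a \<and> (\<integral>x. x^2 \<partial>M) = (c-\<theta>)/a \<and> (\<integral>x. x^2 \<partial>N) = (c-\<theta>)/a)"
proof -
  have M: "strategy M" and N: "strategy N" using NE unfolding nash_def by auto
  note sm = strat_moments[OF M] and sn = strat_moments[OF N]
  note H = nash_ineqs[OF NE]
  show ?thesis
  proof (cases "(\<integral>x. x^2 \<partial>M) > (mean M)^2")
    case True
    from half[OF a b t sm(1) sm(3) sn(1) sn(3) H True] show ?thesis by simp
  next
    case F1: False
    show ?thesis
    proof (cases "(\<integral>x. x^2 \<partial>N) > (mean N)^2")
      case True
      from half[OF a b t sn(1) sn(3) sm(1) sm(3) H(2) H(1) True] show ?thesis by simp
    next
      case False
      hence e2: "(\<integral>x. x^2 \<partial>N) = (mean N)^2" and e1: "(\<integral>x. x^2 \<partial>M) = (mean M)^2"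
        using F1 sm(3) sn(3) by auto
      have P: "mean M = mean N \<and> a*(mean M)^2 - 2*b*mean M + (c-\<theta>) = 0 \<and> a*mean M - b \<le> 0"
        by (rule pure[OF a b t sm(1) sn(1)]) (use H e1 e2 in simp_all)
      thus ?thesis using sm(2) sn(2) e1 e2 by auto
    qed
  qed
qed

theorem theorem1:
  fixes a b c \<theta> :: real
  assumes "a \<noteq> 0" and "b > 0" and "c > 0" and "0 < \<theta>" and "\<theta> < c"
  defines "\<kappa> \<equiv> b / a"
  defines "\<zeta> \<equiv> \<kappa>^2 - (c - \<theta>) / a"
  shows "(\<zeta> \<ge> 0 \<longrightarrow>
            (\<forall>M N. nash a b c \<theta> M N \<longleftrightarrow>
               (M = return borel (\<kappa> - sgn a * sqrt \<zeta>) \<and> N = return borel (\<kappa> - sgn a * sqrt \<zeta>))))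
       \<and> (\<zeta> < 0 \<longrightarrow>
            (\<forall>x y. 0 \<le> x \<longrightarrow> 0 \<le> y \<longrightarrow> \<not> nash a b c \<theta> (return borel x) (return borel y))
          \<and> (\<forall>M N. nash a b c \<theta> M N \<longrightarrow>
               mean M = \<kappa> \<and> mean N = \<kappa> \<and> var M = - \<zeta> \<and> var N = - \<zeta>)
          \<and> (\<forall>M N. strategy M \<longrightarrow> strategy N \<longrightarrow>
               mean M = \<kappa> \<longrightarrow> mean N = \<kappa> \<longrightarrow> var M = - \<zeta> \<longrightarrow> var N = - \<zeta> \<longrightarrow>
               nash a b c \<theta> M N))"
proof -
  define t where "t = c - \<theta>"
  have a: "a \<noteq> 0" and b: "b > 0" and t: "t > 0" using assms by (auto simp: t_def)
  have tt: "c - \<theta> > 0" using t by (simp add: t_def)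
  have zeta_a: "a^2 * \<zeta> = b^2 - a*t"
    using a by (simp add: \<zeta>_def \<kappa>_def t_def field_simps power2_eq_square)
  have root: "x = \<kappa> - sgn a * sqrt \<zeta>" if q: "a*x^2 - 2*b*x + t = 0" and n: "a*x - b \<le> 0" for x
  proof -
    have "(a*x - b)^2 = a*(a*x^2 - 2*b*x + t) + b^2 - a*t" by (simp add: power2_eq_square algebra_simps)
    hence "(a*x - b)^2 = a^2*\<zeta>" using q zeta_a by simp
    hence "sqrt ((a*x - b)^2) = sqrt (a^2*\<zeta>)" by simp
    hence "\<bar>a*x - b\<bar> = \<bar>a\<bar> * sqrt \<zeta>" by (simp add: real_sqrt_mult)
    hence "a*x - b = - (\<bar>a\<bar> * sqrt \<zeta>)" using n by simp
    hence "a*x = b - \<bar>a\<bar> * sqrt \<zeta>" by simp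
    hence "x = (b - \<bar>a\<bar> * sqrt \<zeta>)/a" using a by (simp add: field_simps)
    also have "\<dots> = \<kappa> - sgn a * sqrt \<zeta>" using a
      by (cases "a > 0") (auto simp: \<kappa>_def field_simps)
    finally show ?thesis .
  qed
  show ?thesis
  proof (rule conjI)
    show "\<zeta> \<ge> 0 \<longrightarrow> (\<forall>M N. nash a b c \<theta> M N \<longleftrightarrow> (M = return borel (\<kappa> - sgn a * sqrt \<zeta>) \<and> N = return borel (\<kappa> - sgn a * sqrt \<zeta>)))"
    proof (intro impI allI)
    assume z: "\<zeta> \<ge> 0"
    define xs where "xs = \<kappa> - sgn a * sqrt \<zeta>"
    have xs_n: "a*xs - b = - (\<bar>a\<bar> * sqrt \<zeta>)" using a
      by (cases "a > 0") (auto simp: xs_def \<kappa>_def field_simps)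
    have xs_q: "a*xs^2 - 2*b*xs + t = 0"
    proof -
      have "(a*xs - b)^2 = a^2 * \<zeta>" using xs_n z by (simp add: power_mult_distrib)
      hence "a*(a*xs^2 - 2*b*xs + t) = 0" using zeta_a by (simp add: power2_eq_square algebra_simps)
      thus ?thesis using a by simp
    qed
    have xs0: "xs \<ge> 0"
    proof (cases "a > 0")
      case True
      have "\<zeta> \<le> \<kappa>^2" using True t by (simp add: \<zeta>_def t_def)
      hence "sqrt \<zeta> \<le> sqrt (\<kappa>^2)" by (rule real_sqrt_le_mono)
      moreover have "\<kappa> > 0" using True b by (simp add: \<kappa>_def)
      ultimately have "sqrt \<zeta> \<le> \<kappa>" by simp
      thus ?thesis using True by (simp add: xs_def)
    next
      case False
      hence an: "a < 0" using a by simp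
      have "\<zeta> \<ge> \<kappa>^2" using an t divide_nonneg_neg[of "c-\<theta>" a] by (simp add: \<zeta>_def t_def)
      hence "sqrt \<zeta> \<ge> \<bar>\<kappa>\<bar>" using real_sqrt_le_mono by fastforce
      thus ?thesis using an by (simp add: xs_def)
    qed
    fix M N
    show "nash a b c \<theta> M N \<longleftrightarrow> (M = return borel (\<kappa> - sgn a * sqrt \<zeta>) \<and> N = return borel (\<kappa> - sgn a * sqrt \<zeta>))"
      unfolding xs_def[symmetric]
    proof
      assume NE: "nash a b c \<theta> M N"
      have M: "strategy M" and N: "strategy N" using NE unfolding nash_def by auto
      from nash_cases[OF a b tt NE] show "M = return borel xs \<and> N = return borel xs"
      proof
        assume P: "var M = 0 \<and> var N = 0 \<and> mean N = mean M \<and> a*(mean M)^2 - 2*b*mean M + (c-\<theta>) = 0 \<and> a*mean M - b \<le> 0"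
        hence "mean M = xs" using root by (auto simp: xs_def t_def)
        thus ?thesis using var0[OF M] var0[OF N] P by auto
      next
        assume P: "mean M = b/a \<and> mean N = b/a \<and> (\<integral>x. x^2 \<partial>M) = (c-\<theta>)/a \<and> (\<integral>x. x^2 \<partial>N) = (c-\<theta>)/a"
        have vM: "var M = - \<zeta>" "var N = - \<zeta>" using P strat_moments(2)[OF M] strat_moments(2)[OF N]
          by (auto simp: \<zeta>_def \<kappa>_def)
        hence z0: "\<zeta> = 0" using strat_moments(2,3)[OF M] z by linarith
        have "mean M = xs" "mean N = xs" using P z0 by (auto simp: xs_def \<kappa>_def)
        thus ?thesis using var0[OF M] var0[OF N] vM z0 by auto
      qed
    next
      assume E: "M = return borel xs \<and> N = return borel xs"
      note R = return_strat[OF xs0]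
      have key: "(a*xs-b)*(\<integral>x. x^2 \<partial>M') + (t-a*xs^2)*mean M' \<le> (a*xs-b)*xs^2 + (t-a*xs^2)*xs"
        if M': "strategy M'" for M'
      proof -
        define A where "A = a*xs - b"
        have A: "A \<le> 0" using xs_n z by (simp add: A_def)
        have B: "t - a*xs^2 = -2*A*xs" using xs_q by (simp add: A_def power2_eq_square algebra_simps)
        have "A*(\<integral>x. x^2 \<partial>M') \<le> A*(mean M')^2"
          using strat_moments(3)[OF M'] A by (simp add: mult_left_mono_neg)
        moreover have "A*(mean M' - xs)^2 \<le> 0" using A by (simp add: mult_nonpos_nonneg)
        ultimately have "A*(\<integral>x. x^2 \<partial>M') + (-2*A*xs)*mean M' \<le> A*xs^2 + (-2*A*xs)*xs"
          by (simp add: power2_eq_square algebra_simps)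
        thus ?thesis unfolding B A_def .
      qed
      have "nash a b c \<theta> (return borel xs) (return borel xs)"
        by (rule nash_suff[OF R(1) R(1)]) (use key in \<open>simp_all add: R t_def\<close>)
      thus "nash a b c \<theta> M N" using E by simp
    qed
    qed
  next
    show "\<zeta> < 0 \<longrightarrow> (\<forall>x y. 0 \<le> x \<longrightarrow> 0 \<le> y \<longrightarrow> \<not> nash a b c \<theta> (return borel x) (return borel y)) \<and> (\<forall>M N. nash a b c \<theta> M N \<longrightarrow> mean M = \<kappa> \<and> mean N = \<kappa> \<and> var M = - \<zeta> \<and> var N = - \<zeta>) \<and> (\<forall>M N. strategy M \<longrightarrow> strategy N \<longrightarrow> mean M = \<kappa> \<longrightarrow> mean N = \<kappa> \<longrightarrow> var M = - \<zeta> \<longrightarrow> var N = - \<zeta> \<longrightarrow> nash a b c \<theta> M N)"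
    proof (intro impI conjI allI)
    assume z: "\<zeta> < 0"
    have mixed: "mean M = \<kappa> \<and> mean N = \<kappa> \<and> var M = - \<zeta> \<and> var N = - \<zeta>" if NE: "nash a b c \<theta> M N" for M N
    proof -
      have M: "strategy M" and N: "strategy N" using NE unfolding nash_def by auto
      from nash_cases[OF a b tt NE] show ?thesis
      proof
        assume P: "var M = 0 \<and> var N = 0 \<and> mean N = mean M \<and> a*(mean M)^2 - 2*b*mean M + (c-\<theta>) = 0 \<and> a*mean M - b \<le> 0"
        define m where "m = mean M"
        have "a*m^2 - 2*b*m + t = 0" using P by (simp add: m_def t_def)
        moreover have "(a*m - b)^2 = a*(a*m^2 - 2*b*m + t) + b^2 - a*t" by (simp add: power2_eq_square algebra_simps)
        ultimately have "(a*m - b)^2 = a^2*\<zeta>" using zeta_a by simp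
        moreover have "a^2*\<zeta> < 0" using z a by (simp add: mult_pos_neg)
        ultimately show ?thesis using zero_le_power2[of "a*m-b"] by linarith
      next
        assume P: "mean M = b/a \<and> mean N = b/a \<and> (\<integral>x. x^2 \<partial>M) = (c-\<theta>)/a \<and> (\<integral>x. x^2 \<partial>N) = (c-\<theta>)/a"
        thus ?thesis using strat_moments(2)[OF M] strat_moments(2)[OF N]
          by (auto simp: \<zeta>_def \<kappa>_def)
      qed
    qed
    {
      fix M N assume h: "nash a b c \<theta> M N"
      note mm = mixed[OF h]
      show "mean M = \<kappa>" using mm by simp
      show "mean N = \<kappa>" using mm by simp
      show "var M = - \<zeta>" using mm by simp
      show "var N = - \<zeta>" using mm by simp
    }
    {
      fix x y :: real assume x: "0 \<le> x" and y: "0 \<le> y"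
      show "\<not> nash a b c \<theta> (return borel x) (return borel y)"
      proof
        assume "nash a b c \<theta> (return borel x) (return borel y)"
        hence "var (return borel x) = - \<zeta>" using mixed by blast
        moreover have "var (return borel x) = 0"
          using strat_moments(2)[OF return_strat(1)[OF x]] return_strat[OF x] by simp
        ultimately show False using z by simp
      qed
    }
    {
      fix M N assume M: "strategy M" and N: "strategy N" and mM: "mean M = \<kappa>" and mN: "mean N = \<kappa>"
        and vM: "var M = - \<zeta>" and vN: "var N = - \<zeta>"
      have m2: "(\<integral>x. x^2 \<partial>M) = t/a" using strat_moments(2)[OF M] vM mM
        by (simp add: \<zeta>_def t_def)
      have n2: "(\<integral>x. x^2 \<partial>N) = t/a" using strat_moments(2)[OF N] vN mN
        by (simp add: \<zeta>_def t_def)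
      have k: "a*\<kappa> - b = 0" using a by (simp add: \<kappa>_def)
      have k2: "t - a*(t/a) = 0" using a by simp
      show "nash a b c \<theta> M N"
        by (rule nash_suff[OF M N]) (simp_all only: mM mN m2 n2 k flip: t_def, simp_all add: k2 a)
    }
    qed
  qed
qed

end
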